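(* A regulator splits new bandwidth $B\ge 0$ between two SPs as $B_1^n,B_2^n\ge0$ with $B_1^n+B_2^n=B$; SP $i$ then has total bandwidth $B_i=B_i^o+B_i^n$ and must satisfy $B_{i,S}\ge B_{i,S}^0:=B_i^n$. For this split, let $\mathrm{SW}_{\mathrm{wo}}^*$ be the maximal social welfare over all allocations with $B_{i,S}\in[0,B_i]$; $\mathrm{SW}_{\mathrm{w}}^*$ the maximal social welfare over allocations with $B_{i,S}\in[B_i^n,B_i]$; and $\mathrm{SW}_{\mathrm{w}}^{\mathrm{NE}}$ the social welfare at the unique Nash equilibrium of the constrained two-SP bandwidth game. Let $T=\frac{(B_1^o+B_2^o)N_f\epsilon}{N_m}$. Then: 1. If $B>T$, then $\mathrm{SW}_{\mathrm{w}}^{\mathrm{NE}}\le\mathrm{SW}_{\mathrm{w}}^*<\mathrm{SW}_{\mathrm{wo}}^*$, and $\mathrm{SW}_{\mathrm{w}}^{\mathrm{NE}}=\mathrm{SW}_{\mathrm{w}}^*$ if and only if $\frac{\partial S_i}{\partial B_{i,S}}\le 0$ for $i=1,2$ when evaluated at the profile $(B_{1,S},B_{2,S})=(B_1^n,B_2^n)$, i.e. iff for $i=1,2$ $$\lambda_S(R_S^0)^{-\alpha}-(R_M^0)^{-\alpha}-\frac{\alpha\lambda_S^2B_i^nR_0}{N_f}(R_S^0)^{-\alpha-1}+\frac{\alpha B_i^oR_0}{N_m}(R_M^0)^{-\alpha-1}\le 0,$$ where $R_S^0=\frac{\lambda_S(B_1^n+B_2^n)R_0}{N_f}$ and $R_M^0=\frac{(B_1^o+B_2^o)R_0}{N_m}$.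 2. If $B\le T$, then $\mathrm{SW}_{\mathrm{w}}^{\mathrm{NE}}\le\mathrm{SW}_{\mathrm{w}}^*=\mathrm{SW}_{\mathrm{wo}}^*$, and $\mathrm{SW}_{\mathrm{w}}^{\mathrm{NE}}=\mathrm{SW}_{\mathrm{wo}}^*$ if and only if $$B_1^n\in\Big[B-\frac{B_2^oN_f\epsilon}{N_m},\ \frac{B_1^oN_f\epsilon}{N_m}\Big],\qquad B_2^n=B-B_1^n.$$
   Context: Fixed parameters: $\alpha\in(0,1)$; densities $N_m>0$ (mobile users) and $N_f>0$ (fixed users); spectral efficiency $R_0>0$; common small-cell density $\lambda_S>1$ (macro density normalized to 1); initial bandwidths $B_1^o,B_2^o>0$, usable for either macro- or small-cells; the new bandwidth may be used only for small-cells. Utility $u(r)=\frac{r^{1-\alpha}}{1-\alpha}$, $u'(r)=r^{-\alpha}$. Let $\epsilon=\lambda_S^{1/\alpha-1}$. Two-SP bandwidth game with totals $B_i$ and lower bounds $B_{i,S}^0$: SP $i$ chooses $B_{i,S}\in[B_{i,S}^0,B_i]$, $B_{i,M}=B_i-B_{i,S}$; average rates at market-clearing prices (mobile users on macro-cells, fixed users on small-cells) are $R_S=\frac{\lambda_S(B_{1,S}+B_{2,S})R_0}{N_f}$, $R_M=\frac{(B_{1,M}+B_{2,M})R_0}{N_m}$; SP $i$'s revenue is $S_i=R_0B_{i,M}R_M^{-\alpha}+R_0\lambda_SB_{i,S}R_S^{-\alpha}$ (zero-bandwidth terms are $0$). This game has a unique pure Nash equilibrium. Social welfare of a profile is $\mathrm{SW}=N_m\,u(R_M)+N_f\,u(R_S)$.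 *)

theory Defs
  imports "HOL-Analysis.Analysis"
begin

definition util :: "real \<Rightarrow> real \<Rightarrow> real" where
  "util \<alpha> r = r powr (1 - \<alpha>) / (1 - \<alpha>)"

definition rateS :: "real \<Rightarrow> real \<Rightarrow> real \<Rightarrow> real \<Rightarrow> real \<Rightarrow> real" where
  "rateS Nf R0 lam x1 x2 = lam * (x1 + x2) * R0 / Nf"

definition rateM :: "real \<Rightarrow> real \<Rightarrow> real \<Rightarrow> real \<Rightarrow> real \<Rightarrow> real \<Rightarrow> real" where
  "rateM Nm R0 B1 B2 x1 x2 = ((B1 - x1) + (B2 - x2)) * R0 / Nm"

definition SW :: "real \<Rightarrow> real \<Rightarrow> real \<Rightarrow> real \<Rightarrow> real \<Rightarrow> real \<Rightarrow> real \<Rightarrow> real \<Rightarrow> real \<Rightarrow> real" where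
  "SW \<alpha> Nm Nf R0 lam B1 B2 x1 x2 =
     Nm * util \<alpha> (rateM Nm R0 B1 B2 x1 x2) + Nf * util \<alpha> (rateS Nf R0 lam x1 x2)"

definition revenue :: "real \<Rightarrow> real \<Rightarrow> real \<Rightarrow> real \<Rightarrow> real \<Rightarrow> real \<Rightarrow> real \<Rightarrow> real \<Rightarrow> real \<Rightarrow> real" where
  "revenue \<alpha> Nm Nf R0 lam Bi xi Bj xj =
     (if Bi - xi = 0 then 0 else R0 * (Bi - xi) * (rateM Nm R0 Bi Bj xi xj) powr (- \<alpha>))
   + (if xi = 0 then 0 else R0 * lam * xi * (rateS Nf R0 lam xi xj) powr (- \<alpha>))"

definition is_NE :: "real \<Rightarrow> real \<Rightarrow> real \<Rightarrow> real \<Rightarrow> real \<Rightarrow> real \<Rightarrow> real \<Rightarrow> real \<Rightarrow> real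
    \<Rightarrow> real \<Rightarrow> real \<Rightarrow> bool" where
  "is_NE \<alpha> Nm Nf R0 lam B1 B2 L1 L2 x1 x2 \<longleftrightarrow>
     x1 \<in> {L1..B1} \<and> x2 \<in> {L2..B2} \<and>
     (\<forall>y \<in> {L1..B1}. revenue \<alpha> Nm Nf R0 lam B1 y B2 x2 \<le> revenue \<alpha> Nm Nf R0 lam B1 x1 B2 x2) \<and>
     (\<forall>y \<in> {L2..B2}. revenue \<alpha> Nm Nf R0 lam B2 y B1 x1 \<le> revenue \<alpha> Nm Nf R0 lam B2 x2 B1 x1)"

definition optSW :: "real \<Rightarrow> real \<Rightarrow> real \<Rightarrow> real \<Rightarrow> real \<Rightarrow> real \<Rightarrow> real \<Rightarrow> real \<Rightarrow> real \<Rightarrow> real" where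
  "optSW \<alpha> Nm Nf R0 lam B1 B2 L1 L2 =
     Sup {SW \<alpha> Nm Nf R0 lam B1 B2 x1 x2 | x1 x2. x1 \<in> {L1..B1} \<and> x2 \<in> {L2..B2}}"

end

theory Submission
  imports Defs
begin

lemma powr_m1_mult: "(r0::real) > 0 \<Longrightarrow> r0 powr (b - 1) * r0 = r0 powr b"
  by (simp add: powr_diff)

lemma tangent_strict:
  fixes b r r0 :: real
  assumes b: "0 < b" "b < 1" and r0: "r0 > 0" and r: "r \<ge> 0" and ne: "r \<noteq> r0"
  shows "r powr b < r0 powr b + b * r0 powr (b - 1) * (r - r0)"
proof -
  define g where "g t = r0 powr b + b * r0 powr (b - 1) * (t - r0) - t powr b" for t
  have g0: "g r0 = 0" by (simp add: g_def)
  have der: "DERIV g t :> b * r0 powr (b - 1) - b * t powr (b - 1)" if "t > 0" for t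
    unfolding g_def using that
    by (auto intro!: derivative_eq_intros)
  have cont: "continuous_on {u..v} g" if "u > 0" for u v
  proof (intro continuous_at_imp_continuous_on ballI)
    fix x assume "x \<in> {u..v}"
    then have "x > 0" using that by auto
    then show "isCont g x" using der[of x] by (rule_tac DERIV_isCont) auto
  qed
  show ?thesis
  proof (cases "r > r0")
    case True
    have "g r0 < g r"
    proof (rule DERIV_pos_imp_increasing_open[OF True])
      fix t assume t: "r0 < t" "t < r"
      have "t powr (b - 1) < r0 powr (b - 1)" using t r0 b by (intro powr_less_mono2_neg) auto
      then show "\<exists>y. DERIV g t :> y \<and> 0 < y" using der[of t] t r0 b by (intro exI[of _ "b * r0 powr (b - 1) - b * t powr (b - 1)"]) auto
    qed (use cont r0 in auto)
    then show ?thesis using g0 by (simp add: g_def)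
  next
    case False
    then have lt: "r < r0" using ne by auto
    show ?thesis
    proof (cases "r = 0")
      case True
      have "r0 powr (b - 1) * r0 = r0 powr b" using r0 by (simp add: powr_diff)
      moreover have "r0 powr b > 0" using r0 by simp
      ultimately show ?thesis using True b by (simp add: algebra_simps)
    next
      case False
      then have rp: "r > 0" using r by auto
      have "g r > g r0"
      proof (rule DERIV_neg_imp_decreasing_open[OF lt])
        fix t assume t: "r < t" "t < r0"
        have "r0 powr (b - 1) < t powr (b - 1)" using t rp b by (intro powr_less_mono2_neg) auto
        then show "\<exists>y. DERIV g t :> y \<and> y < 0" using der[of t] t rp b by (intro exI[of _ "b * r0 powr (b - 1) - b * t powr (b - 1)"]) auto
      qed (use cont rp in auto)
      then show ?thesis using g0 by (simp add: g_def)
    qed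
  qed
qed

definition Phi :: "real \<Rightarrow> real \<Rightarrow> real \<Rightarrow> real \<Rightarrow> real \<Rightarrow> real \<Rightarrow> real \<Rightarrow> real \<Rightarrow> real \<Rightarrow> real" where
  "Phi \<alpha> Nm Nf R0 lam Bi yi Bj yj =
     lam * rateS Nf R0 lam yi yj powr (- \<alpha>) - rateM Nm R0 Bi Bj yi yj powr (- \<alpha>)
     - \<alpha> * lam\<^sup>2 * yi * R0 / Nf * rateS Nf R0 lam yi yj powr (- \<alpha> - 1)
     + \<alpha> * (Bi - yi) * R0 / Nm * rateM Nm R0 Bi Bj yi yj powr (- \<alpha> - 1)"

lemma revenue_eq: "revenue \<alpha> Nm Nf R0 lam Bi y Bj yj =
   R0 * (Bi - y) * rateM Nm R0 Bi Bj y yj powr (- \<alpha>) + R0 * lam * y * rateS Nf R0 lam y yj powr (- \<alpha>)"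
  by (simp add: revenue_def)

lemma revenue_deriv:
  assumes "Nm > 0" "Nf > 0" "rateM Nm R0 Bi Bj yi yj > 0" "rateS Nf R0 lam yi yj > 0"
  shows "DERIV (\<lambda>y. revenue \<alpha> Nm Nf R0 lam Bi y Bj yj) yi :> R0 * Phi \<alpha> Nm Nf R0 lam Bi yi Bj yj"
proof -
  have e: "(\<lambda>y. revenue \<alpha> Nm Nf R0 lam Bi y Bj yj) = (\<lambda>y.
     R0 * (Bi - y) * (((Bi - y) + (Bj - yj)) * R0 / Nm) powr (- \<alpha>) + R0 * lam * y * (lam * (y + yj) * R0 / Nf) powr (- \<alpha>))"
    by (simp add: revenue_eq rateM_def rateS_def)
  show ?thesis unfolding e using assms unfolding Phi_def rateM_def rateS_def
    apply (auto intro!: derivative_eq_intros)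
    apply (simp only: power2_eq_square diff_divide_distrib add_divide_distrib ring_distribs)
    apply (simp add: field_simps)
    done
qed

lemma foc:
  fixes f :: "real \<Rightarrow> real"
  assumes der: "DERIV f xi :> R0 * P" and R0: "R0 > 0" and xi: "L \<le> xi" "xi \<le> Bi"
    and opt: "\<forall>y\<in>{L..Bi}. f y \<le> f xi"
  shows "(xi > L \<longrightarrow> P \<ge> 0) \<and> (xi < Bi \<longrightarrow> P \<le> 0)"
proof safe
  assume "xi > L"
  show "P \<ge> 0"
  proof (rule ccontr)
    assume "\<not> P \<ge> 0"
    then have "R0 * P < 0" using R0 by (simp add: mult_pos_neg)
    from DERIV_neg_dec_left[OF der this] obtain d where d: "d > 0" "\<forall>h>0. h < d \<longrightarrow> f xi < f (xi - h)" by auto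
    define h where "h = min d (xi - L) / 2"
    have "h > 0" "h < d" "h \<le> xi - L" using d \<open>xi > L\<close> by (auto simp: h_def)
    then have "f xi < f (xi - h)" "xi - h \<in> {L..Bi}" using d xi by auto
    then show False using opt by force
  qed
next
  assume "xi < Bi"
  show "P \<le> 0"
  proof (rule ccontr)
    assume "\<not> P \<le> 0"
    then have "R0 * P > 0" using R0 by simp
    from DERIV_pos_inc_right[OF der this] obtain d where d: "d > 0" "\<forall>h>0. h < d \<longrightarrow> f xi < f (xi + h)" by auto
    define h where "h = min d (Bi - xi) / 2"
    have "h > 0" "h < d" "h \<le> Bi - xi" using d \<open>xi < Bi\<close> by (auto simp: h_def)
    then have "f xi < f (xi + h)" "xi + h \<in> {L..Bi}" using d xi by auto
    then show False using opt by force
  qed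
qed

lemma util_tangent:
  assumes a: "0 < \<alpha>" "\<alpha> < 1" and r0: "r0 > 0" and r: "r \<ge> 0"
  shows "util \<alpha> r \<le> util \<alpha> r0 + r0 powr (- \<alpha>) * (r - r0)"
    and "r \<noteq> r0 \<Longrightarrow> util \<alpha> r < util \<alpha> r0 + r0 powr (- \<alpha>) * (r - r0)"
proof -
  have e: "(1 - \<alpha>) - 1 = - \<alpha>" by simp
  have key: "r \<noteq> r0 \<Longrightarrow> r powr (1 - \<alpha>) < r0 powr (1 - \<alpha>) + (1 - \<alpha>) * r0 powr (- \<alpha>) * (r - r0)"
    using tangent_strict[of "1 - \<alpha>" r0 r] a r0 r by (simp add: e)
  have div: "util \<alpha> r0 + r0 powr (- \<alpha>) * (r - r0) = (r0 powr (1 - \<alpha>) + (1 - \<alpha>) * r0 powr (- \<alpha>) * (r - r0)) / (1 - \<alpha>)"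
    using a by (simp add: util_def field_simps)
  show "r \<noteq> r0 \<Longrightarrow> util \<alpha> r < util \<alpha> r0 + r0 powr (- \<alpha>) * (r - r0)"
    unfolding div using key a by (simp add: util_def divide_strict_right_mono)
  then show "util \<alpha> r \<le> util \<alpha> r0 + r0 powr (- \<alpha>) * (r - r0)"
    by (cases "r = r0") force+
qed

lemma SW_tangent:
  assumes a: "0 < \<alpha>" "\<alpha> < 1" and pos: "Nm > 0" "Nf > 0" "R0 > 0" "lam > 0"
    and M0: "rateM Nm R0 B1 B2 z1 z2 > 0" and S0: "rateS Nf R0 lam z1 z2 > 0"
    and M: "rateM Nm R0 B1 B2 y1 y2 \<ge> 0" and S: "rateS Nf R0 lam y1 y2 \<ge> 0"
  shows "SW \<alpha> Nm Nf R0 lam B1 B2 y1 y2 \<le> SW \<alpha> Nm Nf R0 lam B1 B2 z1 z2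
          + R0 * ((y1 + y2) - (z1 + z2)) * (lam * rateS Nf R0 lam z1 z2 powr (- \<alpha>) - rateM Nm R0 B1 B2 z1 z2 powr (- \<alpha>))"
    and "y1 + y2 \<noteq> z1 + z2 \<Longrightarrow> SW \<alpha> Nm Nf R0 lam B1 B2 y1 y2 < SW \<alpha> Nm Nf R0 lam B1 B2 z1 z2
          + R0 * ((y1 + y2) - (z1 + z2)) * (lam * rateS Nf R0 lam z1 z2 powr (- \<alpha>) - rateM Nm R0 B1 B2 z1 z2 powr (- \<alpha>))"
proof -
  let ?M = "rateM Nm R0 B1 B2 y1 y2" and ?Mz = "rateM Nm R0 B1 B2 z1 z2"
  let ?S = "rateS Nf R0 lam y1 y2" and ?Sz = "rateS Nf R0 lam z1 z2"
  have eM: "Nm * (?Mz powr (- \<alpha>) * (?M - ?Mz)) = - R0 * ((y1 + y2) - (z1 + z2)) * ?Mz powr (- \<alpha>)"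
  proof -
    have d: "Nm * (?M - ?Mz) = - R0 * ((y1 + y2) - (z1 + z2))" using pos by (simp add: rateM_def field_simps)
    have "Nm * (?Mz powr (- \<alpha>) * (?M - ?Mz)) = ?Mz powr (- \<alpha>) * (Nm * (?M - ?Mz))" by (simp only: ac_simps)
    then show ?thesis using d by simp
  qed
  have eS: "Nf * (?Sz powr (- \<alpha>) * (?S - ?Sz)) = R0 * ((y1 + y2) - (z1 + z2)) * lam * ?Sz powr (- \<alpha>)"
  proof -
    have d: "Nf * (?S - ?Sz) = R0 * ((y1 + y2) - (z1 + z2)) * lam" using pos by (simp add: rateS_def field_simps)
    have "Nf * (?Sz powr (- \<alpha>) * (?S - ?Sz)) = ?Sz powr (- \<alpha>) * (Nf * (?S - ?Sz))" by (simp only: ac_simps)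
    then show ?thesis using d by simp
  qed
  have tM: "Nm * util \<alpha> ?M \<le> Nm * util \<alpha> ?Mz + Nm * (?Mz powr (- \<alpha>) * (?M - ?Mz))"
    using util_tangent(1)[OF a M0 M] pos by (simp add: distrib_left[symmetric])
  have tS: "Nf * util \<alpha> ?S \<le> Nf * util \<alpha> ?Sz + Nf * (?Sz powr (- \<alpha>) * (?S - ?Sz))"
    using util_tangent(1)[OF a S0 S] pos by (simp add: distrib_left[symmetric])
  show "SW \<alpha> Nm Nf R0 lam B1 B2 y1 y2 \<le> SW \<alpha> Nm Nf R0 lam B1 B2 z1 z2
          + R0 * ((y1 + y2) - (z1 + z2)) * (lam * ?Sz powr (- \<alpha>) - ?Mz powr (- \<alpha>))"
    using tM tS unfolding SW_def eM eS by (simp add: algebra_simps)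
  assume ne: "y1 + y2 \<noteq> z1 + z2"
  have "?S \<noteq> ?Sz" using ne pos by (simp add: rateS_def)
  then have tS': "Nf * util \<alpha> ?S < Nf * util \<alpha> ?Sz + Nf * (?Sz powr (- \<alpha>) * (?S - ?Sz))"
    using util_tangent(2)[OF a S0 S] pos by (simp add: distrib_left[symmetric])
  show "SW \<alpha> Nm Nf R0 lam B1 B2 y1 y2 < SW \<alpha> Nm Nf R0 lam B1 B2 z1 z2
          + R0 * ((y1 + y2) - (z1 + z2)) * (lam * ?Sz powr (- \<alpha>) - ?Mz powr (- \<alpha>))"
    using tM tS' unfolding SW_def eM eS by (simp add: algebra_simps)
qed

definition psi :: "real \<Rightarrow> real \<Rightarrow> real \<Rightarrow> real" where
  "psi \<alpha> a m = a powr (- \<alpha>) - \<alpha> * m * a powr (- \<alpha> - 1)"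

lemma powr_succ: "(a::real) > 0 \<Longrightarrow> a powr x * a = a powr (x + 1)"
  by (simp add: powr_add)

lemma powr_split1: "(a::real) > 0 \<Longrightarrow> a powr (- \<alpha> - 1) = a powr (- \<alpha> - 2) * a"
proof -
  have e: "- \<alpha> - 2 + 1 = - \<alpha> - 1" by simp
  assume "a > 0" then show ?thesis by (metis powr_succ e)
qed

lemma powr_split0: "(a::real) > 0 \<Longrightarrow> a powr (- \<alpha>) = a powr (- \<alpha> - 2) * a * a"
proof -
  have e: "- \<alpha> - 1 + 1 = - \<alpha>" by simp
  assume a: "a > 0" then show ?thesis by (metis powr_succ e powr_split1)
qed

lemma psi_deriv:
  assumes pos: "a0 + t * da > 0"
  shows "DERIV (\<lambda>t. psi \<alpha> (a0 + t * da) (m0 + t * dm)) t :>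
     \<alpha> * (a0 + t * da) powr (- \<alpha> - 2) * (- (a0 + t * da) * da + (\<alpha> + 1) * (m0 + t * dm) * da - dm * (a0 + t * da))"
proof -
  define a where "a = a0 + t * da"
  have a: "a > 0" using pos by (simp add: a_def)
  have e2: "- \<alpha> - 1 - 1 = - \<alpha> - 2" by simp
  have "DERIV (\<lambda>t. psi \<alpha> (a0 + t * da) (m0 + t * dm)) t :>
     (- \<alpha>) * a powr (- \<alpha> - 1) * da - (\<alpha> * dm * a powr (- \<alpha> - 1) + \<alpha> * (m0 + t * dm) * ((- \<alpha> - 1) * a powr (- \<alpha> - 1 - 1) * da))"
    unfolding psi_def a_def using pos
    by (auto intro!: derivative_eq_intros DERIV_fun_powr[THEN DERIV_cong] simp: algebra_simps)
  then show ?thesis unfolding a_def[symmetric] e2 powr_split1[OF a]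
    by (simp add: algebra_simps)
qed

lemma Q_pos:
  fixes \<alpha> m1 m2 d1 d2 :: real
  assumes a: "0 < \<alpha>" "\<alpha> < 1" and m: "m1 \<ge> 0" "m2 \<ge> 0" "m1 + m2 > 0" and d: "d1 \<noteq> 0 \<or> d2 \<noteq> 0"
  shows "(m1 + m2) * ((d1 + d2)\<^sup>2 + d1\<^sup>2 + d2\<^sup>2) - (\<alpha> + 1) * (d1 + d2) * (m1 * d1 + m2 * d2) > 0"
proof -
  define c1 where "c1 = (1 - \<alpha>) * (d1 + d2 / 2)\<^sup>2 + (2 - (1 - \<alpha>) / 4) * d2\<^sup>2"
  define c2 where "c2 = (1 - \<alpha>) * (d2 + d1 / 2)\<^sup>2 + (2 - (1 - \<alpha>) / 4) * d1\<^sup>2"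
  have c1: "c1 > 0"
  proof (cases "d2 = 0")
    case True then have "d1 \<noteq> 0" using d by auto
    then show ?thesis using True a by (simp add: c1_def)
  next
    case False
    have "(1 - \<alpha>) * (d1 + d2 / 2)\<^sup>2 \<ge> 0" using a by simp
    moreover have "(2 - (1 - \<alpha>) / 4) * d2\<^sup>2 > 0" using False a by simp
    ultimately show ?thesis by (simp add: c1_def)
  qed
  have c2: "c2 > 0"
  proof (cases "d1 = 0")
    case True then have "d2 \<noteq> 0" using d by auto
    then show ?thesis using True a by (simp add: c2_def)
  next
    case False
    have "(1 - \<alpha>) * (d2 + d1 / 2)\<^sup>2 \<ge> 0" using a by simp
    moreover have "(2 - (1 - \<alpha>) / 4) * d1\<^sup>2 > 0" using False a by simp
    ultimately show ?thesis by (simp add: c2_def)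
  qed
  have eq: "(m1 + m2) * ((d1 + d2)\<^sup>2 + d1\<^sup>2 + d2\<^sup>2) - (\<alpha> + 1) * (d1 + d2) * (m1 * d1 + m2 * d2) = m1 * c1 + m2 * c2"
    by (simp add: c1_def c2_def power2_eq_square algebra_simps)
  have "m1 * c1 + m2 * c2 > 0"
  proof (cases "m1 > 0")
    case True then show ?thesis using c1 c2 m by (simp add: add_pos_nonneg)
  next
    case False then have "m2 > 0" using m by auto
    then show ?thesis using c1 c2 m by (simp add: add_nonneg_pos)
  qed
  then show ?thesis using eq by simp
qed

lemma conv_pos: "0 \<le> (t::real) \<Longrightarrow> t \<le> 1 \<Longrightarrow> x > 0 \<Longrightarrow> y > 0 \<Longrightarrow> x + t * (y - x) > 0"
proof -
  assume t: "0 \<le> t" "t \<le> 1" and xy: "x > 0" "y > 0"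
  have "x + t * (y - x) = (1 - t) * x + t * y" by (simp add: algebra_simps)
  moreover have "(1 - t) * x \<ge> 0" "t * y \<ge> 0" using t xy by auto
  moreover have "(1 - t) * x > 0 \<or> t * y > 0" using t xy by (cases "t = 1") auto
  ultimately show ?thesis by linarith
qed

lemma conv_nonneg: "0 \<le> (t::real) \<Longrightarrow> t \<le> 1 \<Longrightarrow> x \<ge> 0 \<Longrightarrow> y \<ge> 0 \<Longrightarrow> x + t * (y - x) \<ge> 0"
proof -
  assume t: "0 \<le> t" "t \<le> 1" and xy: "x \<ge> 0" "y \<ge> 0"
  have "x + t * (y - x) = (1 - t) * x + t * y" by (simp add: algebra_simps)
  moreover have "(1 - t) * x \<ge> 0" "t * y \<ge> 0" using t xy by auto
  ultimately show ?thesis by linarith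
qed

lemma eq_alg:
  fixes PA PB A Bb M1 M2 S1 S2 d1 d2 D lam \<alpha> p q :: real
  assumes "A = M1 + M2" "Bb = S1 + S2" "D = d1 + d2"
  shows "d1 * (lam * (\<alpha> * PB * (- Bb * (q * D) + (\<alpha> + 1) * S1 * (q * D) - (q * d1) * Bb))
             - \<alpha> * PA * (- A * (- p * D) + (\<alpha> + 1) * M1 * (- p * D) - (- p * d1) * A))
     + d2 * (lam * (\<alpha> * PB * (- Bb * (q * D) + (\<alpha> + 1) * S2 * (q * D) - (q * d2) * Bb))
             - \<alpha> * PA * (- A * (- p * D) + (\<alpha> + 1) * M2 * (- p * D) - (- p * d2) * A))
      = - (lam * \<alpha> * q * PB) * ((S1 + S2) * ((d1 + d2)\<^sup>2 + d1\<^sup>2 + d2\<^sup>2) - (\<alpha> + 1) * (d1 + d2) * (S1 * d1 + S2 * d2))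
        - (\<alpha> * p * PA) * ((M1 + M2) * ((d1 + d2)\<^sup>2 + d1\<^sup>2 + d2\<^sup>2) - (\<alpha> + 1) * (d1 + d2) * (M1 * d1 + M2 * d2))"
  using assms by (simp add: power2_eq_square algebra_simps)

lemma rosen_core:
  fixes \<alpha> lam p q m1 m2 s1 s2 d1 d2 :: real
  assumes a: "0 < \<alpha>" "\<alpha> < 1" and pos: "lam > 0" "p > 0" "q > 0"
    and nn: "m1 \<ge> 0" "m2 \<ge> 0" "s1 \<ge> 0" "s2 \<ge> 0"
      "m1 - p * d1 \<ge> 0" "m2 - p * d2 \<ge> 0" "s1 + q * d1 \<ge> 0" "s2 + q * d2 \<ge> 0"
    and ps: "m1 + m2 > 0" "(m1 - p * d1) + (m2 - p * d2) > 0" "s1 + s2 > 0" "(s1 + q * d1) + (s2 + q * d2) > 0"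
    and d: "d1 \<noteq> 0 \<or> d2 \<noteq> 0"
  shows "d1 * ((lam * psi \<alpha> ((s1 + q * d1) + (s2 + q * d2)) (s1 + q * d1) - psi \<alpha> ((m1 - p * d1) + (m2 - p * d2)) (m1 - p * d1))
                - (lam * psi \<alpha> (s1 + s2) s1 - psi \<alpha> (m1 + m2) m1))
       + d2 * ((lam * psi \<alpha> ((s1 + q * d1) + (s2 + q * d2)) (s2 + q * d2) - psi \<alpha> ((m1 - p * d1) + (m2 - p * d2)) (m2 - p * d2))
                - (lam * psi \<alpha> (s1 + s2) s2 - psi \<alpha> (m1 + m2) m2)) < 0"
proof -
  define D where "D = d1 + d2"
  define h where "h t = d1 * (lam * psi \<alpha> ((s1 + s2) + t * (q * D)) (s1 + t * (q * d1)) - psi \<alpha> ((m1 + m2) + t * (- p * D)) (m1 + t * (- p * d1)))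
     + d2 * (lam * psi \<alpha> ((s1 + s2) + t * (q * D)) (s2 + t * (q * d2)) - psi \<alpha> ((m1 + m2) + t * (- p * D)) (m2 + t * (- p * d2)))" for t
  have "h 0 > h 1"
  proof (rule DERIV_neg_imp_decreasing[of 0 1])
    fix t :: real assume t: "0 \<le> t" "t \<le> 1"
    define A where "A = (m1 + m2) + t * (- p * D)"
    define Bb where "Bb = (s1 + s2) + t * (q * D)"
    define M1 where "M1 = m1 + t * (- p * d1)"
    define M2 where "M2 = m2 + t * (- p * d2)"
    define S1 where "S1 = s1 + t * (q * d1)"
    define S2 where "S2 = s2 + t * (q * d2)"
    have Ap: "A > 0" using conv_pos[OF t ps(1) ps(2)] by (simp add: A_def D_def algebra_simps)
    have Bp: "Bb > 0" using conv_pos[OF t ps(3) ps(4)] by (simp add: Bb_def D_def algebra_simps)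
    have M1: "M1 \<ge> 0" using conv_nonneg[OF t nn(1) nn(5)] by (simp add: M1_def algebra_simps)
    have M2: "M2 \<ge> 0" using conv_nonneg[OF t nn(2) nn(6)] by (simp add: M2_def algebra_simps)
    have S1: "S1 \<ge> 0" using conv_nonneg[OF t nn(3) nn(7)] by (simp add: S1_def algebra_simps)
    have S2: "S2 \<ge> 0" using conv_nonneg[OF t nn(4) nn(8)] by (simp add: S2_def algebra_simps)
    have AM: "A = M1 + M2" by (simp add: A_def M1_def M2_def D_def algebra_simps)
    have BS: "Bb = S1 + S2" by (simp add: Bb_def S1_def S2_def D_def algebra_simps)
    let ?PA = "A powr (- \<alpha> - 2)" and ?PB = "Bb powr (- \<alpha> - 2)"
    have der: "DERIV h t :>
       d1 * (lam * (\<alpha> * ?PB * (- Bb * (q * D) + (\<alpha> + 1) * S1 * (q * D) - (q * d1) * Bb))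
             - \<alpha> * ?PA * (- A * (- p * D) + (\<alpha> + 1) * M1 * (- p * D) - (- p * d1) * A))
     + d2 * (lam * (\<alpha> * ?PB * (- Bb * (q * D) + (\<alpha> + 1) * S2 * (q * D) - (q * d2) * Bb))
             - \<alpha> * ?PA * (- A * (- p * D) + (\<alpha> + 1) * M2 * (- p * D) - (- p * d2) * A))"
      unfolding h_def A_def Bb_def M1_def M2_def S1_def S2_def
      using Ap Bp unfolding A_def Bb_def
      by (intro DERIV_add DERIV_cmult DERIV_diff psi_deriv) assumption+
    have eq: "d1 * (lam * (\<alpha> * ?PB * (- Bb * (q * D) + (\<alpha> + 1) * S1 * (q * D) - (q * d1) * Bb))
             - \<alpha> * ?PA * (- A * (- p * D) + (\<alpha> + 1) * M1 * (- p * D) - (- p * d1) * A))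
     + d2 * (lam * (\<alpha> * ?PB * (- Bb * (q * D) + (\<alpha> + 1) * S2 * (q * D) - (q * d2) * Bb))
             - \<alpha> * ?PA * (- A * (- p * D) + (\<alpha> + 1) * M2 * (- p * D) - (- p * d2) * A))
      = - (lam * \<alpha> * q * ?PB) * ((S1 + S2) * ((d1 + d2)\<^sup>2 + d1\<^sup>2 + d2\<^sup>2) - (\<alpha> + 1) * (d1 + d2) * (S1 * d1 + S2 * d2))
        - (\<alpha> * p * ?PA) * ((M1 + M2) * ((d1 + d2)\<^sup>2 + d1\<^sup>2 + d2\<^sup>2) - (\<alpha> + 1) * (d1 + d2) * (M1 * d1 + M2 * d2))"
      by (rule eq_alg[OF AM BS D_def])
    have q1: "(S1 + S2) * ((d1 + d2)\<^sup>2 + d1\<^sup>2 + d2\<^sup>2) - (\<alpha> + 1) * (d1 + d2) * (S1 * d1 + S2 * d2) > 0"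
      using Q_pos[OF a S1 S2 _ d] Bp BS by simp
    have q2: "(M1 + M2) * ((d1 + d2)\<^sup>2 + d1\<^sup>2 + d2\<^sup>2) - (\<alpha> + 1) * (d1 + d2) * (M1 * d1 + M2 * d2) > 0"
      using Q_pos[OF a M1 M2 _ d] Ap AM by simp
    have u: "lam * \<alpha> * q * ?PB > 0" "\<alpha> * p * ?PA > 0" using a pos Ap Bp by auto
    have neg: "- (lam * \<alpha> * q * ?PB) * ((S1 + S2) * ((d1 + d2)\<^sup>2 + d1\<^sup>2 + d2\<^sup>2) - (\<alpha> + 1) * (d1 + d2) * (S1 * d1 + S2 * d2))
        - (\<alpha> * p * ?PA) * ((M1 + M2) * ((d1 + d2)\<^sup>2 + d1\<^sup>2 + d2\<^sup>2) - (\<alpha> + 1) * (d1 + d2) * (M1 * d1 + M2 * d2)) < 0"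
      using mult_pos_pos[OF u(1) q1] mult_pos_pos[OF u(2) q2] by simp
    show "\<exists>y. DERIV h t :> y \<and> y < 0" using der eq neg by auto
  qed simp
  then show ?thesis unfolding h_def D_def by (simp add: algebra_simps)
qed

lemma Phi_psi:
  assumes "Nm > 0" "Nf > 0"
  shows "Phi \<alpha> Nm Nf R0 lam Bi yi Bj yj =
    lam * psi \<alpha> (rateS Nf R0 lam yi yj) (lam * yi * R0 / Nf) - psi \<alpha> (rateM Nm R0 Bi Bj yi yj) ((Bi - yi) * R0 / Nm)"
  unfolding Phi_def psi_def by (simp add: power2_eq_square algebra_simps)

lemma rosen_profiles:
  fixes \<alpha> Nm Nf R0 lam B1 B2 x1 x2 z1 z2 :: real
  assumes a: "0 < \<alpha>" "\<alpha> < 1" and pos: "Nm > 0" "Nf > 0" "R0 > 0" "lam > 0"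
    and b: "0 \<le> z1" "z1 \<le> B1" "0 \<le> z2" "z2 \<le> B2" "0 \<le> x1" "x1 \<le> B1" "0 \<le> x2" "x2 \<le> B2"
    and rz: "rateM Nm R0 B1 B2 z1 z2 > 0" "rateS Nf R0 lam z1 z2 > 0"
    and rx: "rateM Nm R0 B1 B2 x1 x2 > 0" "rateS Nf R0 lam x1 x2 > 0"
    and ne: "x1 \<noteq> z1 \<or> x2 \<noteq> z2"
  shows "(x1 - z1) * (Phi \<alpha> Nm Nf R0 lam B1 x1 B2 x2 - Phi \<alpha> Nm Nf R0 lam B1 z1 B2 z2)
       + (x2 - z2) * (Phi \<alpha> Nm Nf R0 lam B2 x2 B1 x1 - Phi \<alpha> Nm Nf R0 lam B2 z2 B1 z1) < 0"
proof -
  define p where "p = R0 / Nm"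
  define q where "q = lam * R0 / Nf"
  define m1 where "m1 = (B1 - z1) * R0 / Nm"
  define m2 where "m2 = (B2 - z2) * R0 / Nm"
  define s1 where "s1 = lam * z1 * R0 / Nf"
  define s2 where "s2 = lam * z2 * R0 / Nf"
  define d1 where "d1 = x1 - z1"
  define d2 where "d2 = x2 - z2"
  have pp: "p > 0" "q > 0" using pos by (auto simp: p_def q_def)
  have e: "m1 - p * d1 = (B1 - x1) * R0 / Nm" "m2 - p * d2 = (B2 - x2) * R0 / Nm"
    "s1 + q * d1 = lam * x1 * R0 / Nf" "s2 + q * d2 = lam * x2 * R0 / Nf"
    using pos by (simp_all add: m1_def m2_def p_def d1_def d2_def s1_def s2_def q_def field_simps)
  have e2: "m1 + m2 = rateM Nm R0 B1 B2 z1 z2" "m1 + m2 = rateM Nm R0 B2 B1 z2 z1"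
    "s1 + s2 = rateS Nf R0 lam z1 z2" "s1 + s2 = rateS Nf R0 lam z2 z1"
    "(m1 - p * d1) + (m2 - p * d2) = rateM Nm R0 B1 B2 x1 x2"
    "(m1 - p * d1) + (m2 - p * d2) = rateM Nm R0 B2 B1 x2 x1"
    "(s1 + q * d1) + (s2 + q * d2) = rateS Nf R0 lam x1 x2"
    "(s1 + q * d1) + (s2 + q * d2) = rateS Nf R0 lam x2 x1"
    unfolding e using pos by (simp_all add: m1_def m2_def s1_def s2_def rateM_def rateS_def field_simps)
  have core: "d1 * ((lam * psi \<alpha> ((s1 + q * d1) + (s2 + q * d2)) (s1 + q * d1) - psi \<alpha> ((m1 - p * d1) + (m2 - p * d2)) (m1 - p * d1))
                - (lam * psi \<alpha> (s1 + s2) s1 - psi \<alpha> (m1 + m2) m1))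
       + d2 * ((lam * psi \<alpha> ((s1 + q * d1) + (s2 + q * d2)) (s2 + q * d2) - psi \<alpha> ((m1 - p * d1) + (m2 - p * d2)) (m2 - p * d2))
                - (lam * psi \<alpha> (s1 + s2) s2 - psi \<alpha> (m1 + m2) m2)) < 0"
  proof (rule rosen_core[OF a pos(4) pp])
    show "0 \<le> m1" "0 \<le> m2" "0 \<le> s1" "0 \<le> s2" using b pos by (auto simp: m1_def m2_def s1_def s2_def)
    show "0 \<le> m1 - p * d1" "0 \<le> m2 - p * d2" "0 \<le> s1 + q * d1" "0 \<le> s2 + q * d2" unfolding e using b pos by auto
    show "0 < m1 + m2" "0 < s1 + s2" "0 < m1 - p * d1 + (m2 - p * d2)" "0 < s1 + q * d1 + (s2 + q * d2)"
      using e2 rz rx by auto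
    show "d1 \<noteq> 0 \<or> d2 \<noteq> 0" using ne by (auto simp: d1_def d2_def)
  qed
  have ph: "Phi \<alpha> Nm Nf R0 lam B1 x1 B2 x2 = lam * psi \<alpha> ((s1 + q * d1) + (s2 + q * d2)) (s1 + q * d1) - psi \<alpha> ((m1 - p * d1) + (m2 - p * d2)) (m1 - p * d1)"
    "Phi \<alpha> Nm Nf R0 lam B2 x2 B1 x1 = lam * psi \<alpha> ((s1 + q * d1) + (s2 + q * d2)) (s2 + q * d2) - psi \<alpha> ((m1 - p * d1) + (m2 - p * d2)) (m2 - p * d2)"
    "Phi \<alpha> Nm Nf R0 lam B1 z1 B2 z2 = lam * psi \<alpha> (s1 + s2) s1 - psi \<alpha> (m1 + m2) m1"
    "Phi \<alpha> Nm Nf R0 lam B2 z2 B1 z1 = lam * psi \<alpha> (s1 + s2) s2 - psi \<alpha> (m1 + m2) m2"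
    unfolding Phi_psi[OF pos(1,2)] by (simp_all only: e2[symmetric] e[symmetric] m1_def[symmetric] m2_def[symmetric] s1_def[symmetric] s2_def[symmetric])
  show ?thesis using core unfolding ph d1_def d2_def .
qed

lemma rel_base:
  fixes lam \<alpha> RM RS :: real
  assumes "lam > 0" "\<alpha> > 0" "RM > 0"
  shows "lam * (lam * lam powr (1 / \<alpha> - 1) * RM) powr (- \<alpha>) = RM powr (- \<alpha>)"
proof -
  have l: "lam * lam powr (1 / \<alpha> - 1) = lam powr (1 / \<alpha>)"
  proof -
    have "lam powr (1 / \<alpha>) = lam powr (1 + (1 / \<alpha> - 1))" by simp
    also have "\<dots> = lam * lam powr (1 / \<alpha> - 1)" by (simp only: powr_add) (use assms in simp)
    finally show ?thesis by simp
  qed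
  have "(lam powr (1 / \<alpha>) * RM) powr (- \<alpha>) = (lam powr (1 / \<alpha>)) powr (- \<alpha>) * RM powr (- \<alpha>)"
    using assms by (simp add: powr_mult)
  also have "(lam powr (1 / \<alpha>)) powr (- \<alpha>) = lam powr (- 1)"
    using assms by (simp add: powr_powr)
  finally have "(lam powr (1 / \<alpha>) * RM) powr (- \<alpha>) = lam powr (- 1) * RM powr (- \<alpha>)" .
  moreover have "lam * lam powr (- 1) = 1" using assms by (simp add: powr_minus)
  ultimately show ?thesis unfolding l by (metis mult.assoc mult_1)
qed

lemma rel_eq:
  fixes lam \<alpha> RM RS :: real
  assumes "lam > 0" "\<alpha> > 0" "RM > 0" "RS = lam * lam powr (1 / \<alpha> - 1) * RM"
  shows "lam * RS powr (- \<alpha>) - RM powr (- \<alpha>) = 0"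
  using rel_base[OF assms(1-3)] assms(4) by simp

lemma rel_lt:
  fixes lam \<alpha> RM RS :: real
  assumes "lam > 0" "\<alpha> > 0" "RM > 0" "RS > lam * lam powr (1 / \<alpha> - 1) * RM"
  shows "lam * RS powr (- \<alpha>) - RM powr (- \<alpha>) < 0"
proof -
  have "RS powr (- \<alpha>) < (lam * lam powr (1 / \<alpha> - 1) * RM) powr (- \<alpha>)"
  proof (rule powr_less_mono2_neg)
    show "0 < lam * lam powr (1 / \<alpha> - 1) * RM" using assms by simp
  qed (use assms in auto)
  then have "lam * RS powr (- \<alpha>) < lam * (lam * lam powr (1 / \<alpha> - 1) * RM) powr (- \<alpha>)"
    using assms by simp
  then show ?thesis using rel_base[OF assms(1-3)] by simp
qed

lemma small_pow:
  fixes c K d \<alpha> :: real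
  assumes "c > 0" "K > 0" "d > 0" "0 < \<alpha>" "\<alpha> < 1"
  shows "\<exists>h>0. h < d \<and> K * h < c * h powr (1 - \<alpha>)"
proof -
  define h where "h = min (d / 2) ((c / K) powr (1 / \<alpha>) / 2)"
  have cK: "(c / K) powr (1 / \<alpha>) > 0" using assms by simp
  have h1: "h \<le> (c / K) powr (1 / \<alpha>) / 2" "h \<le> d / 2" by (simp_all add: h_def)
  have h0: "h > 0" using assms cK by (simp add: h_def)
  have h: "h > 0" "h < d" "h < (c / K) powr (1 / \<alpha>)" using assms cK h1 h0 by auto
  have "h powr \<alpha> < ((c / K) powr (1 / \<alpha>)) powr \<alpha>"
    using h assms by (intro powr_less_mono2) auto
  also have "\<dots> = c / K" using assms by (simp add: powr_powr)
  finally have ha: "h powr \<alpha> < c / K" .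
  have hp: "h powr \<alpha> > 0" using h by simp
  have "h powr (1 - \<alpha>) = h / h powr \<alpha>" using h by (simp add: powr_diff)
  moreover have "K * h < c * (h / h powr \<alpha>)"
  proof -
    have "K * h powr \<alpha> < c" using ha assms by (simp add: field_simps)
    then have "K * h powr \<alpha> * h < c * h" using h by simp
    then show ?thesis using hp by (simp add: field_simps)
  qed
  ultimately show ?thesis using h by auto
qed

lemma pow_lin: "(h::real) > 0 \<Longrightarrow> k > 0 \<Longrightarrow> h * (h * k) powr (- \<alpha>) = k powr (- \<alpha>) * h powr (1 - \<alpha>)"
proof -
  assume h: "h > 0" and k: "k > 0"
  have "(h * k) powr (- \<alpha>) = h powr (- \<alpha>) * k powr (- \<alpha>)" using h k by (simp add: powr_mult)
  moreover have "h * h powr (- \<alpha>) = h powr (1 - \<alpha>)" using h by (simp add: powr_add[symmetric] powr_diff powr_minus field_simps)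
  ultimately show ?thesis by (metis mult.assoc mult.commute)
qed

lemma excl_top:
  fixes \<alpha> Nm Nf R0 lam L1 B1 B2 :: real
  assumes a: "0 < \<alpha>" "\<alpha> < 1" and pos: "Nm > 0" "Nf > 0" "R0 > 0" "lam > 0"
    and L: "0 \<le> L1" "L1 < B1" "B2 \<ge> 0"
    and opt: "\<forall>y\<in>{L1..B1}. revenue \<alpha> Nm Nf R0 lam B1 y B2 B2 \<le> revenue \<alpha> Nm Nf R0 lam B1 B1 B2 B2"
  shows False
proof -
  define G where "G y = R0 * lam * y * (lam * (y + B2) * R0 / Nf) powr (- \<alpha>)" for y
  have fe: "revenue \<alpha> Nm Nf R0 lam B1 y B2 B2 = R0 * (B1 - y) * ((B1 - y) * R0 / Nm) powr (- \<alpha>) + G y" for y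
    by (simp add: revenue_eq rateM_def rateS_def G_def)
  have "\<exists>D. DERIV G B1 :> D"
    unfolding G_def using L pos by (intro exI) (auto intro!: derivative_eq_intros)
  then obtain D where D: "DERIV G B1 :> D" by auto
  define K where "K = \<bar>D\<bar> + 1"
  have K: "K > 0" by (simp add: K_def)
  have "DERIV (\<lambda>y. G y - K * y) B1 :> D - K" using D by (auto intro!: derivative_eq_intros)
  moreover have "D - K < 0" by (simp add: K_def)
  ultimately obtain d where d: "d > 0" "\<forall>h>0. h < d \<longrightarrow> G B1 - K * B1 < G (B1 - h) - K * (B1 - h)"
    using DERIV_neg_dec_left by blast
  define c where "c = R0 * (R0 / Nm) powr (- \<alpha>)"
  have c: "c > 0" using pos by (simp add: c_def)
  obtain h where h: "h > 0" "h < min d (B1 - L1)" "K * h < c * h powr (1 - \<alpha>)"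
    using small_pow[OF c K _ a, of "min d (B1 - L1)"] d L by auto
  have Gh: "G B1 - G (B1 - h) < K * h" using d h by (auto simp: algebra_simps)
  have f1: "revenue \<alpha> Nm Nf R0 lam B1 B1 B2 B2 = G B1" unfolding fe by simp
  have f2: "revenue \<alpha> Nm Nf R0 lam B1 (B1 - h) B2 B2 = c * h powr (1 - \<alpha>) + G (B1 - h)"
  proof -
    have "R0 * (B1 - (B1 - h)) * ((B1 - (B1 - h)) * R0 / Nm) powr (- \<alpha>) = R0 * (h * (h * (R0 / Nm)) powr (- \<alpha>))"
      by simp
    also have "\<dots> = c * h powr (1 - \<alpha>)" using pow_lin[OF h(1), of "R0 / Nm" \<alpha>] pos by (simp add: c_def)
    finally show ?thesis unfolding fe by simp
  qed
  have "B1 - h \<in> {L1..B1}" using h by auto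
  then have "revenue \<alpha> Nm Nf R0 lam B1 (B1 - h) B2 B2 \<le> revenue \<alpha> Nm Nf R0 lam B1 B1 B2 B2" using opt by blast
  then show False using f1 f2 Gh h by linarith
qed

lemma excl_zero:
  fixes \<alpha> Nm Nf R0 lam B1 B2 :: real
  assumes a: "0 < \<alpha>" "\<alpha> < 1" and pos: "Nm > 0" "Nf > 0" "R0 > 0" "lam > 0"
    and L: "B1 > 0" "B2 \<ge> 0"
    and opt: "\<forall>y\<in>{0..B1}. revenue \<alpha> Nm Nf R0 lam B1 y B2 0 \<le> revenue \<alpha> Nm Nf R0 lam B1 0 B2 0"
  shows False
proof -
  define F where "F y = R0 * (B1 - y) * (((B1 - y) + B2) * R0 / Nm) powr (- \<alpha>)" for y
  have fe: "revenue \<alpha> Nm Nf R0 lam B1 y B2 0 = F y + R0 * lam * y * (lam * y * R0 / Nf) powr (- \<alpha>)" for y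
    by (simp add: revenue_eq rateM_def rateS_def F_def)
  have "\<exists>D. DERIV F 0 :> D"
    unfolding F_def using L pos by (intro exI) (auto intro!: derivative_eq_intros)
  then obtain D where D: "DERIV F 0 :> D" by auto
  define K where "K = \<bar>D\<bar> + 1"
  have K: "K > 0" by (simp add: K_def)
  have "DERIV (\<lambda>y. F y + K * y) 0 :> D + K" using D by (auto intro!: derivative_eq_intros)
  moreover have "D + K > 0" by (simp add: K_def)
  ultimately obtain d where d: "d > 0" "\<forall>h>0. h < d \<longrightarrow> F 0 + K * 0 < F (0 + h) + K * (0 + h)"
    using DERIV_pos_inc_right by blast
  define c where "c = R0 * lam * (lam * R0 / Nf) powr (- \<alpha>)"
  have c: "c > 0" using pos by (simp add: c_def)
  obtain h where h: "h > 0" "h < min d B1" "K * h < c * h powr (1 - \<alpha>)"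
    using small_pow[OF c K _ a, of "min d B1"] d L by auto
  have Fh: "F 0 - F h < K * h" using d h by auto
  have f1: "revenue \<alpha> Nm Nf R0 lam B1 0 B2 0 = F 0" unfolding fe by simp
  have f2: "revenue \<alpha> Nm Nf R0 lam B1 h B2 0 = F h + c * h powr (1 - \<alpha>)"
  proof -
    have "R0 * lam * h * (lam * h * R0 / Nf) powr (- \<alpha>) = R0 * lam * (h * (h * (lam * R0 / Nf)) powr (- \<alpha>))"
      by (simp add: ac_simps)
    also have "\<dots> = c * h powr (1 - \<alpha>)" using pow_lin[OF h(1), of "lam * R0 / Nf" \<alpha>] pos by (simp add: c_def)
    finally show ?thesis unfolding fe by simp
  qed
  have "h \<in> {0..B1}" using h by auto
  then have "revenue \<alpha> Nm Nf R0 lam B1 h B2 0 \<le> revenue \<alpha> Nm Nf R0 lam B1 0 B2 0" using opt by blast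
  then show False using f1 f2 Fh h by linarith
qed

lemma opt_eq:
  assumes "w1 \<in> {L1..B1}" "w2 \<in> {L2..B2}"
    and "\<And>y1 y2. y1 \<in> {L1..B1} \<Longrightarrow> y2 \<in> {L2..B2} \<Longrightarrow> SW \<alpha> Nm Nf R0 lam B1 B2 y1 y2 \<le> SW \<alpha> Nm Nf R0 lam B1 B2 w1 w2"
  shows "optSW \<alpha> Nm Nf R0 lam B1 B2 L1 L2 = SW \<alpha> Nm Nf R0 lam B1 B2 w1 w2"
  unfolding optSW_def using assms by (intro cSup_eq_maximum) auto

lemma psi_prop:
  fixes a r \<alpha> :: real
  assumes "a > 0" shows "psi \<alpha> a (r * a) = (1 - \<alpha> * r) * a powr (- \<alpha>)"
proof -
  have "a powr (- \<alpha> - 1) * a = a powr (- \<alpha>)" using assms by (simp add: powr_split1 powr_split0)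
  then show ?thesis unfolding psi_def by (simp add: algebra_simps)
qed

lemma psi_sum:
  fixes a m1 m2 \<alpha> :: real
  assumes "a > 0" "m1 + m2 = a" shows "psi \<alpha> a m1 + psi \<alpha> a m2 = (2 - \<alpha>) * a powr (- \<alpha>)"
proof -
  have e: "a powr (- \<alpha> - 1) * a = a powr (- \<alpha>)" using assms by (simp add: powr_split1 powr_split0)
  have "psi \<alpha> a m1 + psi \<alpha> a m2 = 2 * a powr (- \<alpha>) - \<alpha> * (m1 + m2) * a powr (- \<alpha> - 1)"
    unfolding psi_def by (simp add: algebra_simps)
  also have "\<dots> = 2 * a powr (- \<alpha>) - \<alpha> * (a powr (- \<alpha> - 1) * a)" using assms(2) by (simp add: ac_simps)
  finally show ?thesis unfolding e by (simp add: algebra_simps)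
qed

lemma SW_sum:
  assumes "y1 + y2 = z1 + z2"
  shows "SW \<alpha> Nm Nf R0 lam B1 B2 y1 y2 = SW \<alpha> Nm Nf R0 lam B1 B2 z1 z2"
    "rateM Nm R0 B1 B2 y1 y2 = rateM Nm R0 B1 B2 z1 z2" "rateS Nf R0 lam y1 y2 = rateS Nf R0 lam z1 z2"
proof -
  have "(B1 - y1) + (B2 - y2) = (B1 - z1) + (B2 - z2)" "y1 + y2 = z1 + z2" using assms by linarith+
  then show "rateM Nm R0 B1 B2 y1 y2 = rateM Nm R0 B1 B2 z1 z2" "rateS Nf R0 lam y1 y2 = rateS Nf R0 lam z1 z2"
    unfolding rateM_def rateS_def by (metis, metis)
  then show "SW \<alpha> Nm Nf R0 lam B1 B2 y1 y2 = SW \<alpha> Nm Nf R0 lam B1 B2 z1 z2" unfolding SW_def by simp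
qed

lemma rate_comm: "rateM Nm R0 B2 B1 x2 x1 = rateM Nm R0 B1 B2 x1 x2" "rateS Nf R0 lam x2 x1 = rateS Nf R0 lam x1 x2"
  by (simp_all add: rateM_def rateS_def algebra_simps)

theorem theorem6:
  fixes \<alpha> Nm Nf R0 lam Bo1 Bo2 B Bn1 Bn2 x1 x2 :: real
  assumes "0 < \<alpha>" "\<alpha> < 1" "Nm > 0" "Nf > 0" "R0 > 0" "lam > 1"
    and "Bo1 > 0" "Bo2 > 0" "B \<ge> 0" "Bn1 \<ge> 0" "Bn2 \<ge> 0" "Bn1 + Bn2 = B"
    and NE: "is_NE \<alpha> Nm Nf R0 lam (Bo1 + Bn1) (Bo2 + Bn2) Bn1 Bn2 x1 x2"
  defines "\<epsilon> \<equiv> lam powr (1 / \<alpha> - 1)"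
    and "T \<equiv> (Bo1 + Bo2) * Nf * lam powr (1 / \<alpha> - 1) / Nm"
    and "SWne \<equiv> SW \<alpha> Nm Nf R0 lam (Bo1 + Bn1) (Bo2 + Bn2) x1 x2"
    and "SWw \<equiv> optSW \<alpha> Nm Nf R0 lam (Bo1 + Bn1) (Bo2 + Bn2) Bn1 Bn2"
    and "SWwo \<equiv> optSW \<alpha> Nm Nf R0 lam (Bo1 + Bn1) (Bo2 + Bn2) 0 0"
    and "RS0 \<equiv> lam * (Bn1 + Bn2) * R0 / Nf"
    and "RM0 \<equiv> (Bo1 + Bo2) * R0 / Nm"
  shows "(B > T \<longrightarrow>
            SWne \<le> SWw \<and> SWw < SWwo \<and>
            (SWne = SWw \<longleftrightarrow>
               (lam * RS0 powr (- \<alpha>) - RM0 powr (- \<alpha>)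
                  - \<alpha> * lam\<^sup>2 * Bn1 * R0 / Nf * RS0 powr (- \<alpha> - 1)
                  + \<alpha> * Bo1 * R0 / Nm * RM0 powr (- \<alpha> - 1) \<le> 0) \<and>
               (lam * RS0 powr (- \<alpha>) - RM0 powr (- \<alpha>)
                  - \<alpha> * lam\<^sup>2 * Bn2 * R0 / Nf * RS0 powr (- \<alpha> - 1)
                  + \<alpha> * Bo2 * R0 / Nm * RM0 powr (- \<alpha> - 1) \<le> 0)))
       \<and> (B \<le> T \<longrightarrow>
            SWne \<le> SWw \<and> SWw = SWwo \<and>
            (SWne = SWwo \<longleftrightarrow>
               Bn1 \<in> {B - Bo2 * Nf * \<epsilon> / Nm .. Bo1 * Nf * \<epsilon> / Nm} \<and> Bn2 = B - Bn1))"
proof -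
  note a = assms(1,2)
  have lam0: "lam > 0" using assms by simp
  note pos = assms(3,4,5) lam0
  define C1 where "C1 = Bo1 + Bn1"
  define C2 where "C2 = Bo2 + Bn2"
  have eps: "\<epsilon> > 0" using lam0 by (simp add: \<epsilon>_def)
  have T_eps: "T = (Bo1 + Bo2) * Nf * \<epsilon> / Nm" by (simp add: T_def \<epsilon>_def)
  have C: "C1 > 0" "C2 > 0" "C1 > Bn1" "C2 > Bn2" using assms by (auto simp: C1_def C2_def)
  have NE': "x1 \<in> {Bn1..C1}" "x2 \<in> {Bn2..C2}"
    "\<forall>y\<in>{Bn1..C1}. revenue \<alpha> Nm Nf R0 lam C1 y C2 x2 \<le> revenue \<alpha> Nm Nf R0 lam C1 x1 C2 x2"
    "\<forall>y\<in>{Bn2..C2}. revenue \<alpha> Nm Nf R0 lam C2 y C1 x1 \<le> revenue \<alpha> Nm Nf R0 lam C2 x2 C1 x1"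
    using NE unfolding is_NE_def C1_def C2_def by auto
  have x: "Bn1 \<le> x1" "x1 \<le> C1" "Bn2 \<le> x2" "x2 \<le> C2" using NE'(1,2) by auto
  have not_top: "\<not> (x1 = C1 \<and> x2 = C2)"
  proof
    assume h: "x1 = C1 \<and> x2 = C2"
    show False
      by (rule excl_top[OF a pos, of Bn1 C1 C2]) (use NE'(3) h assms C in auto)
  qed
  have not_zero: "\<not> (x1 = 0 \<and> x2 = 0)"
  proof
    assume h: "x1 = 0 \<and> x2 = 0"
    then have "Bn1 = 0" using x assms by auto
    then show False
      by (intro excl_zero[OF a pos, of C1 C2]) (use NE'(3) h assms C in auto)
  qed
  have rMx: "rateM Nm R0 C1 C2 x1 x2 > 0"
  proof -
    have "(C1 - x1) + (C2 - x2) > 0" using x not_top by auto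
    then show ?thesis using pos by (simp add: rateM_def)
  qed
  have rSx: "rateS Nf R0 lam x1 x2 > 0"
  proof -
    have "x1 + x2 > 0" using x not_zero assms by auto
    then show ?thesis using pos by (simp add: rateS_def)
  qed
  have foc1: "(x1 > Bn1 \<longrightarrow> Phi \<alpha> Nm Nf R0 lam C1 x1 C2 x2 \<ge> 0) \<and> (x1 < C1 \<longrightarrow> Phi \<alpha> Nm Nf R0 lam C1 x1 C2 x2 \<le> 0)"
    by (rule foc[OF revenue_deriv[OF pos(1,2) rMx rSx] pos(3) x(1,2) NE'(3)])
  have foc2: "(x2 > Bn2 \<longrightarrow> Phi \<alpha> Nm Nf R0 lam C2 x2 C1 x1 \<ge> 0) \<and> (x2 < C2 \<longrightarrow> Phi \<alpha> Nm Nf R0 lam C2 x2 C1 x1 \<le> 0)"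
    by (rule foc[OF revenue_deriv[OF pos(1,2)] pos(3) x(3,4) NE'(4)]) (use rMx rSx rate_comm in auto)
  define th where "th = \<epsilon> * Nf / (Nm + \<epsilon> * Nf)"
  have den: "Nm + \<epsilon> * Nf > 0" using eps pos by (simp add: add_pos_pos)
  have den2: "Nm + Nf * \<epsilon> \<noteq> 0" using den by (simp add: mult.commute)
  have th: "0 < th" "th < 1" using eps pos den by (auto simp: th_def divide_less_eq)
  define z1 where "z1 = C1 * th"
  define z2 where "z2 = C2 * th"
  have z: "0 \<le> z1" "z1 \<le> C1" "0 \<le> z2" "z2 \<le> C2" using th C by (auto simp: z1_def z2_def mult_le_cancel_left1)
  have RMz: "rateM Nm R0 C1 C2 z1 z2 = (C1 + C2) * (1 - th) * R0 / Nm" by (simp add: rateM_def z1_def z2_def algebra_simps)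
  have RSz: "rateS Nf R0 lam z1 z2 = lam * (C1 + C2) * th * R0 / Nf" by (simp add: rateS_def z1_def z2_def algebra_simps)
  have rMz: "rateM Nm R0 C1 C2 z1 z2 > 0" unfolding RMz using C th pos by simp
  have rSz: "rateS Nf R0 lam z1 z2 > 0" unfolding RSz using C th pos by simp
  have rel: "rateS Nf R0 lam z1 z2 = lam * lam powr (1 / \<alpha> - 1) * rateM Nm R0 C1 C2 z1 z2"
  proof -
    have o: "1 - th = Nm / (Nm + \<epsilon> * Nf)" using eps pos den2 by (simp add: th_def field_simps)
    have t1: "th / Nf = \<epsilon> / (Nm + \<epsilon> * Nf)" using pos by (simp add: th_def)
    have t2: "(1 - th) / Nm = 1 / (Nm + \<epsilon> * Nf)" unfolding o using pos by simp
    have "lam * (C1 + C2) * th * R0 / Nf = lam * (C1 + C2) * R0 * (th / Nf)" by simp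
    also have "\<dots> = lam * \<epsilon> * ((C1 + C2) * R0 * ((1 - th) / Nm))" unfolding t1 t2 by simp
    also have "\<dots> = lam * \<epsilon> * ((C1 + C2) * (1 - th) * R0 / Nm)" by simp
    finally show ?thesis unfolding RMz RSz \<epsilon>_def[symmetric] by (simp add: ac_simps)
  qed
  have gz: "lam * rateS Nf R0 lam z1 z2 powr (- \<alpha>) - rateM Nm R0 C1 C2 z1 z2 powr (- \<alpha>) = 0"
    by (rule rel_eq[OF lam0 a(1) rMz rel])
  have Phiz: "Phi \<alpha> Nm Nf R0 lam C1 z1 C2 z2 = 0" "Phi \<alpha> Nm Nf R0 lam C2 z2 C1 z1 = 0"
  proof -
    have g2: "lam * rateS Nf R0 lam z2 z1 powr (- \<alpha>) - rateM Nm R0 C2 C1 z2 z1 powr (- \<alpha>) = 0"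
      using gz rate_comm by simp
    have nz: "C1 + C2 \<noteq> 0" "C1 * Nf + C2 * Nf \<noteq> 0" "C1 * Nm + C2 * Nm \<noteq> 0"
    proof -
      have "C1 * Nf > 0" "C2 * Nf > 0" "C1 * Nm > 0" "C2 * Nm > 0" using C pos by auto
      then show "C1 + C2 \<noteq> 0" "C1 * Nf + C2 * Nf \<noteq> 0" "C1 * Nm + C2 * Nm \<noteq> 0" using C by linarith+
    qed
    have s1: "lam * z1 * R0 / Nf = (C1 / (C1 + C2)) * rateS Nf R0 lam z1 z2"
      unfolding RSz using C pos nz by (simp add: z1_def field_simps)
    have m1: "(C1 - z1) * R0 / Nm = (C1 / (C1 + C2)) * rateM Nm R0 C1 C2 z1 z2"
      unfolding RMz using C pos nz by (simp add: z1_def field_simps)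
    have s2: "lam * z2 * R0 / Nf = (C2 / (C1 + C2)) * rateS Nf R0 lam z2 z1"
      unfolding rate_comm RSz using C pos nz by (simp add: z2_def field_simps)
    have m2: "(C2 - z2) * R0 / Nm = (C2 / (C1 + C2)) * rateM Nm R0 C2 C1 z2 z1"
      unfolding rate_comm RMz using C pos nz by (simp add: z2_def field_simps)
    show "Phi \<alpha> Nm Nf R0 lam C1 z1 C2 z2 = 0"
      unfolding Phi_psi[OF pos(1,2)] s1 m1 psi_prop[OF rSz] psi_prop[OF rMz]
      using gz by (simp add: algebra_simps)
    show "Phi \<alpha> Nm Nf R0 lam C2 z2 C1 z1 = 0"
    proof -
      have rz': "rateS Nf R0 lam z2 z1 > 0" "rateM Nm R0 C2 C1 z2 z1 > 0" using rSz rMz rate_comm by simp_all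
      show ?thesis
      unfolding Phi_psi[OF pos(1,2)] s2 m2 psi_prop[OF rz'(1)] psi_prop[OF rz'(2)]
      using g2 by (simp add: algebra_simps)
    qed
  qed
  have SWz: "SW \<alpha> Nm Nf R0 lam C1 C2 y1 y2 \<le> SW \<alpha> Nm Nf R0 lam C1 C2 z1 z2"
     "y1 + y2 \<noteq> z1 + z2 \<Longrightarrow> SW \<alpha> Nm Nf R0 lam C1 C2 y1 y2 < SW \<alpha> Nm Nf R0 lam C1 C2 z1 z2"
    if "0 \<le> y1" "y1 \<le> C1" "0 \<le> y2" "y2 \<le> C2" for y1 y2
  proof -
    have "rateM Nm R0 C1 C2 y1 y2 \<ge> 0" "rateS Nf R0 lam y1 y2 \<ge> 0"
      using that pos by (auto simp: rateM_def rateS_def)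
    note t = SW_tangent[OF a pos rMz rSz this]
    show "SW \<alpha> Nm Nf R0 lam C1 C2 y1 y2 \<le> SW \<alpha> Nm Nf R0 lam C1 C2 z1 z2" using t(1) gz by simp
    show "y1 + y2 \<noteq> z1 + z2 \<Longrightarrow> SW \<alpha> Nm Nf R0 lam C1 C2 y1 y2 < SW \<alpha> Nm Nf R0 lam C1 C2 z1 z2"
      using t(2) gz by simp
  qed
  have SWwo_eq: "SWwo = SW \<alpha> Nm Nf R0 lam C1 C2 z1 z2"
    unfolding SWwo_def C1_def[symmetric] C2_def[symmetric]
    by (rule opt_eq) (use z SWz in auto)
  have Phib: "Phi \<alpha> Nm Nf R0 lam C1 Bn1 C2 Bn2 = lam * RS0 powr (- \<alpha>) - RM0 powr (- \<alpha>)
                  - \<alpha> * lam\<^sup>2 * Bn1 * R0 / Nf * RS0 powr (- \<alpha> - 1)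
                  + \<alpha> * Bo1 * R0 / Nm * RM0 powr (- \<alpha> - 1)"
    "Phi \<alpha> Nm Nf R0 lam C2 Bn2 C1 Bn1 = lam * RS0 powr (- \<alpha>) - RM0 powr (- \<alpha>)
                  - \<alpha> * lam\<^sup>2 * Bn2 * R0 / Nf * RS0 powr (- \<alpha> - 1)
                  + \<alpha> * Bo2 * R0 / Nm * RM0 powr (- \<alpha> - 1)"
  proof -
    have e: "rateS Nf R0 lam Bn1 Bn2 = RS0" "rateS Nf R0 lam Bn2 Bn1 = RS0"
      "rateM Nm R0 C1 C2 Bn1 Bn2 = RM0" "rateM Nm R0 C2 C1 Bn2 Bn1 = RM0" "C1 - Bn1 = Bo1" "C2 - Bn2 = Bo2"
      by (simp_all add: rateS_def rateM_def RS0_def RM0_def C1_def C2_def algebra_simps)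
    show "Phi \<alpha> Nm Nf R0 lam C1 Bn1 C2 Bn2 = lam * RS0 powr (- \<alpha>) - RM0 powr (- \<alpha>)
                  - \<alpha> * lam\<^sup>2 * Bn1 * R0 / Nf * RS0 powr (- \<alpha> - 1)
                  + \<alpha> * Bo1 * R0 / Nm * RM0 powr (- \<alpha> - 1)"
      unfolding Phi_def e ..
    show "Phi \<alpha> Nm Nf R0 lam C2 Bn2 C1 Bn1 = lam * RS0 powr (- \<alpha>) - RM0 powr (- \<alpha>)
                  - \<alpha> * lam\<^sup>2 * Bn2 * R0 / Nf * RS0 powr (- \<alpha> - 1)
                  + \<alpha> * Bo2 * R0 / Nm * RM0 powr (- \<alpha> - 1)"
      unfolding Phi_def e ..
  qed
  have P1: "B > T \<longrightarrow>
            SWne \<le> SWw \<and> SWw < SWwo \<and>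
            (SWne = SWw \<longleftrightarrow> Phi \<alpha> Nm Nf R0 lam C1 Bn1 C2 Bn2 \<le> 0 \<and> Phi \<alpha> Nm Nf R0 lam C2 Bn2 C1 Bn1 \<le> 0)"
  proof
    assume BT: "B > T"
    have Tpos: "T > 0" unfolding T_eps using assms eps by simp
    have eRS: "rateS Nf R0 lam Bn1 Bn2 = RS0" and eRM: "rateM Nm R0 C1 C2 Bn1 Bn2 = RM0"
      by (simp_all add: rateS_def rateM_def RS0_def RM0_def C1_def C2_def algebra_simps)
    have rMb: "rateM Nm R0 C1 C2 Bn1 Bn2 > 0" unfolding eRM RM0_def using assms by simp
    have Bp: "B > 0" using BT Tpos by linarith
    have rSb: "rateS Nf R0 lam Bn1 Bn2 > 0" unfolding eRS RS0_def using assms Bp lam0 by simp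
    have gb: "lam * rateS Nf R0 lam Bn1 Bn2 powr (- \<alpha>) - rateM Nm R0 C1 C2 Bn1 Bn2 powr (- \<alpha>) < 0"
    proof (rule rel_lt[OF lam0 a(1) rMb])
      have "(Bo1 + Bo2) * Nf * \<epsilon> / Nm < B" using BT T_eps by simp
      then have "(Bo1 + Bo2) * Nf * \<epsilon> / Nm * (lam * R0 / Nf) < B * (lam * R0 / Nf)"
        using pos by (intro mult_strict_right_mono) auto
      moreover have "(Bo1 + Bo2) * Nf * \<epsilon> / Nm * (lam * R0 / Nf) = lam * \<epsilon> * RM0"
        using pos by (simp add: RM0_def field_simps)
      moreover have "B * (lam * R0 / Nf) = RS0" using assms by (simp add: RS0_def)
      ultimately show "lam * lam powr (1 / \<alpha> - 1) * rateM Nm R0 C1 C2 Bn1 Bn2 < rateS Nf R0 lam Bn1 Bn2"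
        unfolding eRS eRM \<epsilon>_def by simp
    qed
    have SWb: "SW \<alpha> Nm Nf R0 lam C1 C2 y1 y2 \<le> SW \<alpha> Nm Nf R0 lam C1 C2 Bn1 Bn2"
       "y1 + y2 \<noteq> Bn1 + Bn2 \<Longrightarrow> SW \<alpha> Nm Nf R0 lam C1 C2 y1 y2 < SW \<alpha> Nm Nf R0 lam C1 C2 Bn1 Bn2"
      if y: "Bn1 \<le> y1" "y1 \<le> C1" "Bn2 \<le> y2" "y2 \<le> C2" for y1 y2
    proof -
      have "rateM Nm R0 C1 C2 y1 y2 \<ge> 0" "rateS Nf R0 lam y1 y2 \<ge> 0"
        using y assms pos by (auto simp: rateM_def rateS_def)
      note t = SW_tangent[OF a pos rMb rSb this]
      have "R0 * ((y1 + y2) - (Bn1 + Bn2)) \<ge> 0" using y pos by simp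
      then have le: "R0 * ((y1 + y2) - (Bn1 + Bn2)) * (lam * rateS Nf R0 lam Bn1 Bn2 powr (- \<alpha>) - rateM Nm R0 C1 C2 Bn1 Bn2 powr (- \<alpha>)) \<le> 0"
        using gb by (simp add: mult_nonneg_nonpos)
      show "SW \<alpha> Nm Nf R0 lam C1 C2 y1 y2 \<le> SW \<alpha> Nm Nf R0 lam C1 C2 Bn1 Bn2" using t(1) le by linarith
      show "y1 + y2 \<noteq> Bn1 + Bn2 \<Longrightarrow> SW \<alpha> Nm Nf R0 lam C1 C2 y1 y2 < SW \<alpha> Nm Nf R0 lam C1 C2 Bn1 Bn2"
        using t(2) le by linarith
    qed
    have SWw_eq: "SWw = SW \<alpha> Nm Nf R0 lam C1 C2 Bn1 Bn2"
      unfolding SWw_def C1_def[symmetric] C2_def[symmetric]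
      by (rule opt_eq) (use C SWb in auto)
    have neB: "Bn1 + Bn2 \<noteq> z1 + z2"
    proof
      assume h: "Bn1 + Bn2 = z1 + z2"
      have "lam * rateS Nf R0 lam Bn1 Bn2 powr (- \<alpha>) - rateM Nm R0 C1 C2 Bn1 Bn2 powr (- \<alpha>) = 0"
        using gz SW_sum(2,3)[OF h] by simp
      then show False using gb by simp
    qed
    have lt: "SW \<alpha> Nm Nf R0 lam C1 C2 Bn1 Bn2 < SW \<alpha> Nm Nf R0 lam C1 C2 z1 z2"
      using SWz(2)[of Bn1 Bn2] neB assms C by auto
    have SWne_C: "SWne = SW \<alpha> Nm Nf R0 lam C1 C2 x1 x2" by (simp add: SWne_def C1_def C2_def)
    have ne_iff: "SWne = SWw \<longleftrightarrow> x1 = Bn1 \<and> x2 = Bn2"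
    proof
      assume "SWne = SWw"
      then have "x1 + x2 = Bn1 + Bn2" using SWb(2)[OF x] unfolding SWne_C SWw_eq by fastforce
      then show "x1 = Bn1 \<and> x2 = Bn2" using x by linarith
    next
      assume "x1 = Bn1 \<and> x2 = Bn2"
      then show "SWne = SWw" unfolding SWne_C SWw_eq by simp
    qed
    have foc_iff: "x1 = Bn1 \<and> x2 = Bn2 \<longleftrightarrow> Phi \<alpha> Nm Nf R0 lam C1 Bn1 C2 Bn2 \<le> 0 \<and> Phi \<alpha> Nm Nf R0 lam C2 Bn2 C1 Bn1 \<le> 0"
    proof
      assume h: "x1 = Bn1 \<and> x2 = Bn2"
      then show "Phi \<alpha> Nm Nf R0 lam C1 Bn1 C2 Bn2 \<le> 0 \<and> Phi \<alpha> Nm Nf R0 lam C2 Bn2 C1 Bn1 \<le> 0"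
        using foc1 foc2 C by auto
    next
      assume h: "Phi \<alpha> Nm Nf R0 lam C1 Bn1 C2 Bn2 \<le> 0 \<and> Phi \<alpha> Nm Nf R0 lam C2 Bn2 C1 Bn1 \<le> 0"
      show "x1 = Bn1 \<and> x2 = Bn2"
      proof (rule ccontr)
        assume ne: "\<not> (x1 = Bn1 \<and> x2 = Bn2)"
        have r: "(x1 - Bn1) * (Phi \<alpha> Nm Nf R0 lam C1 x1 C2 x2 - Phi \<alpha> Nm Nf R0 lam C1 Bn1 C2 Bn2)
          + (x2 - Bn2) * (Phi \<alpha> Nm Nf R0 lam C2 x2 C1 x1 - Phi \<alpha> Nm Nf R0 lam C2 Bn2 C1 Bn1) < 0"
          by (rule rosen_profiles[OF a pos]) (use assms C x rMb rSb rMx rSx ne in auto)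
        have t1: "(x1 - Bn1) * (Phi \<alpha> Nm Nf R0 lam C1 x1 C2 x2 - Phi \<alpha> Nm Nf R0 lam C1 Bn1 C2 Bn2) \<ge> 0"
        proof (cases "x1 = Bn1")
          case False then have "x1 > Bn1" using x by auto
          then show ?thesis using foc1 h by (auto intro!: mult_nonneg_nonneg)
        qed simp
        have t2: "(x2 - Bn2) * (Phi \<alpha> Nm Nf R0 lam C2 x2 C1 x1 - Phi \<alpha> Nm Nf R0 lam C2 Bn2 C1 Bn1) \<ge> 0"
        proof (cases "x2 = Bn2")
          case False then have "x2 > Bn2" using x by auto
          then show ?thesis using foc2 h by (auto intro!: mult_nonneg_nonneg)
        qed simp
        show False using r t1 t2 by linarith
      qed
    qed
    show "SWne \<le> SWw \<and> SWw < SWwo \<and>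
            (SWne = SWw \<longleftrightarrow> Phi \<alpha> Nm Nf R0 lam C1 Bn1 C2 Bn2 \<le> 0 \<and> Phi \<alpha> Nm Nf R0 lam C2 Bn2 C1 Bn1 \<le> 0)"
      using SWb(1)[OF x] lt ne_iff foc_iff unfolding SWne_C SWw_eq SWwo_eq by simp
  qed
  have SWne_C: "SWne = SW \<alpha> Nm Nf R0 lam C1 C2 x1 x2" by (simp add: SWne_def C1_def C2_def)
  have zcond: "Bn \<le> (Bo + Bn) * th \<longleftrightarrow> Bn \<le> Bo * Nf * \<epsilon> / Nm" for Bo Bn
  proof -
    have "(Bo + Bn) * th - Bn = (Bo * Nf * \<epsilon> - Bn * Nm) / (Nm + \<epsilon> * Nf)"
      using den den2 by (simp add: th_def field_simps)
    then have "Bn \<le> (Bo + Bn) * th \<longleftrightarrow> 0 \<le> (Bo * Nf * \<epsilon> - Bn * Nm) / (Nm + \<epsilon> * Nf)" by linarith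
    also have "\<dots> \<longleftrightarrow> 0 \<le> Bo * Nf * \<epsilon> - Bn * Nm" using den by (simp add: zero_le_divide_iff)
    also have "\<dots> \<longleftrightarrow> Bn \<le> Bo * Nf * \<epsilon> / Nm" using pos by (simp add: pos_le_divide_eq)
    finally show ?thesis .
  qed
  have P2: "B \<le> T \<longrightarrow>
            SWne \<le> SWw \<and> SWw = SWwo \<and>
            (SWne = SWwo \<longleftrightarrow>
               Bn1 \<in> {B - Bo2 * Nf * \<epsilon> / Nm .. Bo1 * Nf * \<epsilon> / Nm} \<and> Bn2 = B - Bn1)"
  proof
    assume BT: "B \<le> T"
    have zB: "B \<le> z1 + z2"
    proof -
      have "z1 + z2 = ((Bo1 + Bo2) + B) * th" using assms(12)[symmetric] by (simp add: z1_def z2_def C1_def C2_def algebra_simps)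
      then show ?thesis using zcond[of B "Bo1 + Bo2"] BT unfolding T_eps by simp
    qed
    have zC: "z1 + z2 \<le> B + (Bo1 + Bo2)" using z assms(12) by (simp add: C1_def C2_def)
    define t where "t = (z1 + z2 - B) / (Bo1 + Bo2)"
    have t: "0 \<le> t" "t \<le> 1" using zB zC assms by (auto simp: t_def divide_le_eq_1)
    define w1 where "w1 = Bn1 + t * Bo1"
    define w2 where "w2 = Bn2 + t * Bo2"
    have wsum: "w1 + w2 = z1 + z2"
    proof -
      have "w1 + w2 = B + t * (Bo1 + Bo2)" using assms(12) by (simp add: w1_def w2_def algebra_simps)
      also have "\<dots> = z1 + z2" using assms by (simp add: t_def)
      finally show ?thesis .
    qed
    have w: "w1 \<in> {Bn1..C1}" "w2 \<in> {Bn2..C2}"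
      using t assms by (auto simp: w1_def w2_def C1_def C2_def mult_le_cancel_right1)
    have SWw_eq: "SWw = SW \<alpha> Nm Nf R0 lam C1 C2 z1 z2"
    proof -
      have "SWw = SW \<alpha> Nm Nf R0 lam C1 C2 w1 w2"
        unfolding SWw_def C1_def[symmetric] C2_def[symmetric]
      proof (rule opt_eq[OF w])
        fix y1 y2 assume "y1 \<in> {Bn1..C1}" "y2 \<in> {Bn2..C2}"
        then show "SW \<alpha> Nm Nf R0 lam C1 C2 y1 y2 \<le> SW \<alpha> Nm Nf R0 lam C1 C2 w1 w2"
          using SWz(1)[of y1 y2] SW_sum(1)[OF wsum] assms by auto
      qed
      then show ?thesis using SW_sum(1)[OF wsum] by simp
    qed
    have agg_iff: "SWne = SWwo \<longleftrightarrow> x1 + x2 = z1 + z2"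
      using SWz(2)[of x1 x2] SW_sum(1)[of x1 x2 z1 z2] x assms unfolding SWne_C SWwo_eq by force
    have rosen_xz: "(x1 - z1) * Phi \<alpha> Nm Nf R0 lam C1 x1 C2 x2 + (x2 - z2) * Phi \<alpha> Nm Nf R0 lam C2 x2 C1 x1 < 0"
      if ne: "x1 \<noteq> z1 \<or> x2 \<noteq> z2"
    proof -
      have x0: "0 \<le> x1" "0 \<le> x2" using x assms by auto
      show ?thesis using rosen_profiles[OF a pos z x0(1) x(2) x0(2) x(4) rMz rSz rMx rSx ne] Phiz by simp
    qed
    have cond_iff: "Bn1 \<in> {B - Bo2 * Nf * \<epsilon> / Nm .. Bo1 * Nf * \<epsilon> / Nm} \<and> Bn2 = B - Bn1 \<longleftrightarrow> Bn1 \<le> z1 \<and> Bn2 \<le> z2"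
      using zcond[of Bn1 Bo1] zcond[of Bn2 Bo2] assms(12) unfolding z1_def z2_def C1_def C2_def
      by (auto simp: add.commute)
    have xz1: "x1 = z1 \<and> x2 = z2" if "Bn1 \<le> z1" "Bn2 \<le> z2"
    proof (rule ccontr)
      assume ne: "\<not> (x1 = z1 \<and> x2 = z2)"
      have t1: "(x1 - z1) * Phi \<alpha> Nm Nf R0 lam C1 x1 C2 x2 \<ge> 0"
      proof (cases "x1 > z1")
        case True then show ?thesis using foc1 that by (auto intro!: mult_nonneg_nonneg)
      next
        case False
        then have "x1 - z1 \<le> 0" by simp
        moreover have "x1 < z1 \<Longrightarrow> Phi \<alpha> Nm Nf R0 lam C1 x1 C2 x2 \<le> 0" using foc1 z by auto
        ultimately show ?thesis by (cases "x1 = z1") (auto intro!: mult_nonpos_nonpos)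
      qed
      have t2: "(x2 - z2) * Phi \<alpha> Nm Nf R0 lam C2 x2 C1 x1 \<ge> 0"
      proof (cases "x2 > z2")
        case True then show ?thesis using foc2 that by (auto intro!: mult_nonneg_nonneg)
      next
        case False
        then have "x2 - z2 \<le> 0" by simp
        moreover have "x2 < z2 \<Longrightarrow> Phi \<alpha> Nm Nf R0 lam C2 x2 C1 x1 \<le> 0" using foc2 z by auto
        ultimately show ?thesis by (cases "x2 = z2") (auto intro!: mult_nonpos_nonpos)
      qed
      show False using rosen_xz ne t1 t2 by linarith
    qed
    have xz2: "x1 = z1 \<and> x2 = z2" if agg: "x1 + x2 = z1 + z2"
    proof (rule ccontr)
      assume ne: "\<not> (x1 = z1 \<and> x2 = z2)"
      have sum0: "Phi \<alpha> Nm Nf R0 lam C1 x1 C2 x2 + Phi \<alpha> Nm Nf R0 lam C2 x2 C1 x1 = 0"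
      proof -
        have gx: "lam * rateS Nf R0 lam x1 x2 powr (- \<alpha>) - rateM Nm R0 C1 C2 x1 x2 powr (- \<alpha>) = 0"
          using gz SW_sum(2,3)[OF agg] by simp
        have ps1: "psi \<alpha> (rateS Nf R0 lam x1 x2) (lam * x1 * R0 / Nf) + psi \<alpha> (rateS Nf R0 lam x1 x2) (lam * x2 * R0 / Nf)
            = (2 - \<alpha>) * rateS Nf R0 lam x1 x2 powr (- \<alpha>)"
          by (rule psi_sum[OF rSx]) (simp add: rateS_def add_divide_distrib algebra_simps)
        have ps2: "psi \<alpha> (rateM Nm R0 C1 C2 x1 x2) ((C1 - x1) * R0 / Nm) + psi \<alpha> (rateM Nm R0 C1 C2 x1 x2) ((C2 - x2) * R0 / Nm)
            = (2 - \<alpha>) * rateM Nm R0 C1 C2 x1 x2 powr (- \<alpha>)"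
          by (rule psi_sum[OF rMx]) (use pos in \<open>simp add: rateM_def field_simps\<close>)
        have "Phi \<alpha> Nm Nf R0 lam C1 x1 C2 x2 + Phi \<alpha> Nm Nf R0 lam C2 x2 C1 x1
          = lam * (psi \<alpha> (rateS Nf R0 lam x1 x2) (lam * x1 * R0 / Nf) + psi \<alpha> (rateS Nf R0 lam x1 x2) (lam * x2 * R0 / Nf))
            - (psi \<alpha> (rateM Nm R0 C1 C2 x1 x2) ((C1 - x1) * R0 / Nm) + psi \<alpha> (rateM Nm R0 C1 C2 x1 x2) ((C2 - x2) * R0 / Nm))"
        proof -
          have rc: "rateS Nf R0 lam x2 x1 = rateS Nf R0 lam x1 x2" "rateM Nm R0 C2 C1 x2 x1 = rateM Nm R0 C1 C2 x1 x2"
            by (rule rate_comm)+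
          show ?thesis unfolding Phi_psi[OF pos(1,2)] rc by (simp add: algebra_simps)
        qed
        also have "\<dots> = (2 - \<alpha>) * (lam * rateS Nf R0 lam x1 x2 powr (- \<alpha>) - rateM Nm R0 C1 C2 x1 x2 powr (- \<alpha>))"
          unfolding ps1 ps2 by (simp add: algebra_simps)
        finally show ?thesis using gx by simp
      qed
      have d: "x2 - z2 = - (x1 - z1)" using agg by simp
      have "(x1 - z1) * Phi \<alpha> Nm Nf R0 lam C1 x1 C2 x2 + (x2 - z2) * Phi \<alpha> Nm Nf R0 lam C2 x2 C1 x1
          = 2 * ((x1 - z1) * Phi \<alpha> Nm Nf R0 lam C1 x1 C2 x2)"
      proof -
        have "Phi \<alpha> Nm Nf R0 lam C2 x2 C1 x1 = - Phi \<alpha> Nm Nf R0 lam C1 x1 C2 x2" using sum0 by linarith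
        then show ?thesis unfolding d by (simp add: algebra_simps)
      qed
      moreover have "(x1 - z1) * Phi \<alpha> Nm Nf R0 lam C1 x1 C2 x2 \<ge> 0"
      proof (cases "x1 > z1")
        case True
        then have "x2 < z2" using agg by linarith
        then have "Phi \<alpha> Nm Nf R0 lam C2 x2 C1 x1 \<le> 0" using foc2 z by auto
        then have "Phi \<alpha> Nm Nf R0 lam C1 x1 C2 x2 \<ge> 0" using sum0 by linarith
        then show ?thesis using True by simp
      next
        case False
        then have "x1 - z1 \<le> 0" by simp
        moreover have "x1 < z1 \<Longrightarrow> Phi \<alpha> Nm Nf R0 lam C1 x1 C2 x2 \<le> 0" using foc1 z by auto
        ultimately show ?thesis by (cases "x1 = z1") (auto intro!: mult_nonpos_nonpos)
      qed
      ultimately show False using rosen_xz ne by linarith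
    qed
    have "SWne = SWwo \<longleftrightarrow> Bn1 \<le> z1 \<and> Bn2 \<le> z2"
      using agg_iff xz1 xz2 x by auto
    then show "SWne \<le> SWw \<and> SWw = SWwo \<and>
            (SWne = SWwo \<longleftrightarrow>
               Bn1 \<in> {B - Bo2 * Nf * \<epsilon> / Nm .. Bo1 * Nf * \<epsilon> / Nm} \<and> Bn2 = B - Bn1)"
      using SWz(1)[of x1 x2] x assms cond_iff unfolding SWne_C SWw_eq SWwo_eq by auto
  qed
  show ?thesis using P1 P2 unfolding Phib by blast
qed

end
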